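(* Let $\varepsilon>0$ and let $G=(V,E)$ be a multigraph with $|V|=s\ge 2$ vertices and $|E|=m\ge s(1+\varepsilon)$ edges. Then there exists a set $S\subseteq V$ of $|S|\le 8\log(s)\cdot\lceil 1/\varepsilon\rceil$ vertices spanning at least $|S|+1$ edges.
   Context: A multigraph is a graph that may contain parallel edges and (possibly parallel) self-loops; edges are counted with multiplicity. A set of vertices $S$ spans an edge if all endpoints of the edge lie in $S$ (a self-loop at $v$ is spanned iff $v\in S$). Logarithms are base 2. *)

theory Defs
  imports Complex_Main
begin

text \<open>A multigraph is given by a finite vertex set V, a finite set E of edge
  identifiers (so parallel edges are distinct elements of E), and an endpoint map
  ends assigning to each edge its unordered pair of endpoints, represented as an
  ordered pair; a self-loop at v has ends e = (v, v).\<close>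

definition multigraph :: "'v set \<Rightarrow> 'e set \<Rightarrow> ('e \<Rightarrow> 'v \<times> 'v) \<Rightarrow> bool" where
  "multigraph V E ends \<longleftrightarrow> finite V \<and> finite E \<and>
     (\<forall>e\<in>E. fst (ends e) \<in> V \<and> snd (ends e) \<in> V)"

definition spans :: "'v set \<Rightarrow> ('e \<Rightarrow> 'v \<times> 'v) \<Rightarrow> 'e \<Rightarrow> bool" where
  "spans S ends e \<longleftrightarrow> fst (ends e) \<in> S \<and> snd (ends e) \<in> S"

definition spanned_edges :: "'v set \<Rightarrow> 'e set \<Rightarrow> ('e \<Rightarrow> 'v \<times> 'v) \<Rightarrow> 'e set" where
  "spanned_edges S E ends = {e \<in> E. spans S ends e}"

end

theory Submission
  imports Defs
begin

definition nbr :: "'e set \<Rightarrow> ('e \<Rightarrow> 'v \<times> 'v) \<Rightarrow> 'v set \<Rightarrow> 'v set" where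
  "nbr E ends A = {w. \<exists>e\<in>E. (fst (ends e) \<in> A \<and> snd (ends e) = w) \<or> (snd (ends e) \<in> A \<and> fst (ends e) = w)}"

fun ball :: "'e set \<Rightarrow> ('e \<Rightarrow> 'v \<times> 'v) \<Rightarrow> 'v \<Rightarrow> nat \<Rightarrow> 'v set" where
  "ball E ends v 0 = {v}"
| "ball E ends v (Suc n) = ball E ends v n \<union> nbr E ends (ball E ends v n)"

definition deg :: "'e set \<Rightarrow> ('e \<Rightarrow> 'v \<times> 'v) \<Rightarrow> 'v \<Rightarrow> nat" where
  "deg E ends u = card {e\<in>E. fst (ends e) = u} + card {e\<in>E. snd (ends e) = u}"

lemma card_fibres:
  assumes "finite E" "finite A"
  shows "card {e\<in>E. f e \<in> A} = (\<Sum>u\<in>A. card {e\<in>E. f e = u})"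
proof -
  have "{e\<in>E. f e \<in> A} = (\<Union>u\<in>A. {e\<in>E. f e = u})" by auto
  moreover have "card (\<Union>u\<in>A. {e\<in>E. f e = u}) = (\<Sum>u\<in>A. card {e\<in>E. f e = u})"
    by (rule card_UN_disjoint) (use assms in auto)
  ultimately show ?thesis by simp
qed

lemma sum_deg:
  assumes "finite E" "finite A"
  shows "(\<Sum>u\<in>A. deg E ends u) = card {e\<in>E. fst (ends e) \<in> A} + card {e\<in>E. snd (ends e) \<in> A}"
  unfolding deg_def sum.distrib
  using card_fibres[OF assms, of "\<lambda>e. fst (ends e)"] card_fibres[OF assms, of "\<lambda>e. snd (ends e)"] by simp

lemma growth:
  assumes "finite E" "finite A"
  shows "(\<Sum>u\<in>A. deg E ends u) \<le> card (spanned_edges A E ends) + card (spanned_edges (A \<union> nbr E ends A) E ends)"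
proof -
  let ?X = "{e\<in>E. fst (ends e) \<in> A}" and ?Y = "{e\<in>E. snd (ends e) \<in> A}"
  have "card ?X + card ?Y = card (?X \<union> ?Y) + card (?X \<inter> ?Y)"
    by (rule card_Un_Int) (use assms in auto)
  moreover have "?X \<inter> ?Y = spanned_edges A E ends"
    by (auto simp: spanned_edges_def spans_def)
  moreover have "card (?X \<union> ?Y) \<le> card (spanned_edges (A \<union> nbr E ends A) E ends)"
    by (rule card_mono) (auto simp: spanned_edges_def spans_def nbr_def assms)
  ultimately show ?thesis using sum_deg[OF assms, of ends] by (simp only:)
qed

locale bfs =
  fixes V :: "'v set" and E :: "'e set" and ends :: "'e \<Rightarrow> 'v \<times> 'v" and v :: 'v
  assumes finV: "finite V" and finE: "finite E"
    and endsV: "\<forall>e\<in>E. fst (ends e) \<in> V \<and> snd (ends e) \<in> V"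
    and vV: "v \<in> V"
    and deg3: "\<forall>u\<in>V. 3 \<le> deg E ends u"
begin

abbreviation B where "B \<equiv> ball E ends v"
abbreviation sp where "sp A \<equiv> spanned_edges A E ends"

lemma nbr_sub: "nbr E ends A \<subseteq> V" using endsV by (auto simp: nbr_def)
lemma B_sub: "B n \<subseteq> V" by (induction n) (use nbr_sub vV in auto)
lemma B_fin: "finite (B n)" using B_sub finV finite_subset by blast
lemma B_mono: "m \<le> n \<Longrightarrow> B m \<subseteq> B n" by (induction n) (auto simp: le_Suc_eq)
lemma sp_fin: "finite (sp A)" using finE by (simp add: spanned_edges_def)

lemma double:
  assumes "card (sp (B j)) \<le> card (B j)" "card (sp (B (Suc j))) \<le> card (B (Suc j))"
  shows "2 * card (B j) \<le> card (B (Suc j))"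
proof -
  have "(\<Sum>u\<in>B j. 3) \<le> (\<Sum>u\<in>B j. deg E ends u)"
    by (rule sum_mono) (use deg3 B_sub in auto)
  also have "\<dots> \<le> card (sp (B j)) + card (sp (B (Suc j)))"
    using growth[OF finE B_fin] by simp
  finally show ?thesis using assms by simp
qed

lemma pow: "(\<forall>i\<le>j. card (sp (B i)) \<le> card (B i)) \<Longrightarrow> 2^j \<le> card (B j)"
proof (induction j)
  case 0 then show ?case by simp
next
  case (Suc j)
  then have "2^j \<le> card (B j)" by simp
  moreover have "2 * card (B j) \<le> card (B (Suc j))"
    by (rule double) (use Suc.prems in auto)
  ultimately show ?case by simp
qed

lemma exists_r: "\<exists>r. card (B r) < card (sp (B r)) \<and> 2^r \<le> 2 * card V"
proof -
  have "card V \<noteq> 0" using vV finV by auto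
  then have cV: "card V \<ge> 1" by simp
  have "\<not> (\<forall>i\<le>card V. card (sp (B i)) \<le> card (B i))"
  proof
    assume "\<forall>i\<le>card V. card (sp (B i)) \<le> card (B i)"
    then have "2^card V \<le> card (B (card V))" by (rule pow)
    also have "\<dots> \<le> card V" by (rule card_mono[OF finV B_sub])
    finally show False using less_exp[of "card V"] by simp
  qed
  then have ex: "\<exists>i. card (B i) < card (sp (B i))" by (auto simp: not_le)
  define r where "r = (LEAST i. card (B i) < card (sp (B i)))"
  have r1: "card (B r) < card (sp (B r))" unfolding r_def by (rule LeastI_ex[OF ex])
  have r2: "\<forall>i<r. card (sp (B i)) \<le> card (B i)"
    using not_less_Least[of _ "\<lambda>i. card (B i) < card (sp (B i))"] unfolding r_def by (auto simp: not_less)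
  have "2^r \<le> 2 * card V"
  proof (cases r)
    case 0 then show ?thesis using cV by simp
  next
    case (Suc q)
    have "2^q \<le> card (B q)" by (rule pow) (use r2 Suc in auto)
    also have "\<dots> \<le> card V" by (rule card_mono[OF finV B_sub])
    finally show ?thesis using Suc by simp
  qed
  with r1 show ?thesis by blast
qed

definition reach where "reach u \<longleftrightarrow> (\<exists>n. u \<in> B n)"
definition dep where "dep u = (LEAST n. u \<in> B n)"

lemma dep_in: "reach u \<Longrightarrow> u \<in> B (dep u)"
  unfolding reach_def dep_def by (rule LeastI_ex)
lemma dep_le: "u \<in> B n \<Longrightarrow> dep u \<le> n"
  unfolding dep_def by (rule Least_le)
lemma reachI: "u \<in> B n \<Longrightarrow> reach u" unfolding reach_def by blast
lemma dep0: "reach u \<Longrightarrow> dep u = 0 \<longleftrightarrow> u = v"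
  using dep_in dep_le[of v 0] by fastforce

definition pe where "pe u = (SOME e. e \<in> E \<and> ((fst (ends e) \<in> B (dep u - 1) \<and> snd (ends e) = u) \<or> (snd (ends e) \<in> B (dep u - 1) \<and> fst (ends e) = u)))"
definition par where "par u = (if snd (ends (pe u)) = u then fst (ends (pe u)) else snd (ends (pe u)))"

lemma pe_props:
  assumes "reach u" "0 < dep u"
  shows "pe u \<in> E \<and> par u \<in> B (dep u - 1) \<and> ((fst (ends (pe u)) = par u \<and> snd (ends (pe u)) = u) \<or> (fst (ends (pe u)) = u \<and> snd (ends (pe u)) = par u))"
proof -
  obtain n where n: "dep u = Suc n" using assms(2) gr0_conv_Suc by blast
  have uin: "u \<in> B (Suc n)" using dep_in[OF assms(1)] n by simp
  have unot: "u \<notin> B n" using dep_le[of u n] n by auto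
  then have "u \<in> nbr E ends (B n)" using uin by simp
  then have ex: "\<exists>e. e \<in> E \<and> ((fst (ends e) \<in> B (dep u - 1) \<and> snd (ends e) = u) \<or> (snd (ends e) \<in> B (dep u - 1) \<and> fst (ends e) = u))"
    using n by (auto simp: nbr_def)
  have pe: "pe u \<in> E \<and> ((fst (ends (pe u)) \<in> B (dep u - 1) \<and> snd (ends (pe u)) = u) \<or> (snd (ends (pe u)) \<in> B (dep u - 1) \<and> fst (ends (pe u)) = u))"
    unfolding pe_def by (rule someI_ex[OF ex])
  then show ?thesis using unot n unfolding par_def by auto
qed

lemma dep_par:
  assumes "reach u" "0 < dep u"
  shows "reach (par u) \<and> dep (par u) = dep u - 1"
proof -
  have p: "par u \<in> B (dep u - 1)" using pe_props[OF assms] by blast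
  then have r: "reach (par u)" by (rule reachI)
  have le1: "dep (par u) \<le> dep u - 1" using dep_le[OF p] .
  have "par u \<in> B (dep (par u))" using dep_in[OF r] .
  moreover have "pe u \<in> E" and "(fst (ends (pe u)) = par u \<and> snd (ends (pe u)) = u) \<or> (fst (ends (pe u)) = u \<and> snd (ends (pe u)) = par u)"
    using pe_props[OF assms] by blast+
  ultimately have "u \<in> nbr E ends (B (dep (par u)))"
    unfolding nbr_def mem_Collect_eq by metis
  then have "u \<in> B (Suc (dep (par u)))" by simp
  then have "dep u \<le> Suc (dep (par u))" by (rule dep_le)
  then show ?thesis using r le1 by simp
qed

fun pathn :: "nat \<Rightarrow> 'v \<Rightarrow> 'v set" where
  "pathn 0 u = {u}"
| "pathn (Suc n) u = insert u (pathn n (par u))"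

lemma path_fin: "finite (pathn n u)" by (induction n arbitrary: u) auto
lemma path_card: "card (pathn n u) \<le> Suc n"
  by (induction n arbitrary: u) (auto intro: le_trans[OF card_insert_le_m1])

lemma path_props:
  "reach u \<Longrightarrow> dep u = n \<Longrightarrow> v \<in> pathn n u \<and> u \<in> pathn n u \<and>
     (\<forall>x\<in>pathn n u. reach x \<and> dep x \<le> n \<and> (0 < dep x \<longrightarrow> par x \<in> pathn n u))"
proof (induction n arbitrary: u)
  case 0
  then have "u = v" using dep0 by blast
  then show ?case using 0 by auto
next
  case (Suc n)
  have dp: "reach (par u) \<and> dep (par u) = n" using dep_par[of u] Suc.prems by simp
  note IH = Suc.IH[OF conjunct1[OF dp] conjunct2[OF dp]]
  show ?case using IH Suc.prems by auto
qed

lemma pe_inj: "inj_on pe {u. reach u \<and> 0 < dep u}"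
proof (rule inj_onI)
  fix x y assume x: "x \<in> {u. reach u \<and> 0 < dep u}" and y: "y \<in> {u. reach u \<and> 0 < dep u}" and eq: "pe x = pe y"
  from x have x1: "reach x" "0 < dep x" by auto
  from y have y1: "reach y" "0 < dep y" by auto
  show "x = y"
  proof (rule ccontr)
    assume ne: "x \<noteq> y"
    have px: "((fst (ends (pe x)) = par x \<and> snd (ends (pe x)) = x) \<or> (fst (ends (pe x)) = x \<and> snd (ends (pe x)) = par x))"
      using pe_props[OF x1] by blast
    have py: "((fst (ends (pe y)) = par y \<and> snd (ends (pe y)) = y) \<or> (fst (ends (pe y)) = y \<and> snd (ends (pe y)) = par y))"
      using pe_props[OF y1] by blast
    have h: "x = par y \<and> y = par x" using px py eq ne by auto
    have "dep y = dep x - 1" using dep_par[OF x1] h by metis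
    moreover have "dep x = dep y - 1" using dep_par[OF y1] h by metis
    ultimately show False using x1 y1 by linarith
  qed
qed


lemma two_elems:
  assumes "finite A" "2 \<le> card A"
  obtains a b where "a \<in> A" "b \<in> A" "a \<noteq> b"
proof -
  obtain a where a: "a \<in> A" using assms by fastforce
  have "card (A - {a}) \<ge> 1" using assms a by simp
  then have "A - {a} \<noteq> {}" by (metis card.empty not_one_le_zero)
  then obtain b where "b \<in> A - {a}" by blast
  then show ?thesis using a that by blast
qed

lemma witness:
  "\<exists>S F r. S \<subseteq> V \<and> F \<subseteq> E \<and> (\<forall>e\<in>F. spans S ends e) \<and> card F = card S + 1 \<and>
     card S \<le> 4 * r + 1 \<and> 2^r \<le> 2 * card V"
proof -
  obtain r where r1: "card (B r) < card (sp (B r))" and r2: "2^r \<le> 2 * card V"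
    using exists_r by blast
  define D where "D = B r - {v}"
  have Dr: "\<And>u. u \<in> D \<Longrightarrow> reach u \<and> 0 < dep u \<and> dep u \<le> r"
  proof -
    fix u assume u: "u \<in> D"
    then have "reach u" using reachI D_def by blast
    moreover have "dep u \<le> r" using u dep_le D_def by blast
    ultimately show "reach u \<and> 0 < dep u \<and> dep u \<le> r" using u dep0 D_def by blast
  qed
  have injD: "inj_on pe D" using pe_inj by (rule inj_on_subset) (use Dr in blast)
  have vB: "v \<in> B r" using B_mono[of 0 r] by auto
  have cD: "card D = card (B r) - 1" using vB B_fin D_def by simp
  define T where "T = pe ` D"
  have cT: "card T = card D" unfolding T_def using injD card_image by blast
  have TB: "T \<subseteq> sp (B r)"
  proof
    fix e assume "e \<in> T"
    then obtain u where u: "u \<in> D" "e = pe u" unfolding T_def by blast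
    have p: "pe u \<in> E \<and> par u \<in> B (dep u - 1) \<and> ((fst (ends (pe u)) = par u \<and> snd (ends (pe u)) = u) \<or> (fst (ends (pe u)) = u \<and> snd (ends (pe u)) = par u))"
      using pe_props Dr u by blast
    have "dep u - 1 \<le> r" using Dr[OF u(1)] by linarith
    then have "B (dep u - 1) \<subseteq> B r" using B_mono by blast
    then show "e \<in> sp (B r)" using p u D_def by (auto simp: spanned_edges_def spans_def)
  qed
  have "card (sp (B r) - T) = card (sp (B r)) - card T"
    using TB sp_fin card_Diff_subset finite_subset by metis
  moreover have "card (B r) \<noteq> 0" using vB B_fin by auto
  ultimately have "2 \<le> card (sp (B r) - T)" using r1 cT cD by linarith
  then obtain f1 f2 where f1: "f1 \<in> sp (B r) - T" and f2: "f2 \<in> sp (B r) - T" and f12: "f1 \<noteq> f2"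
    using two_elems sp_fin by (metis finite_Diff)
  define X where "X = {fst (ends f1), snd (ends f1), fst (ends f2), snd (ends f2)}"
  have XB: "X \<subseteq> B r" using f1 f2 unfolding X_def by (auto simp: spanned_edges_def spans_def)
  have Xr: "\<And>x. x \<in> X \<Longrightarrow> reach x \<and> dep x \<le> r" using XB reachI dep_le by blast
  define S where "S = (\<Union>x\<in>X. pathn (dep x) x)"
  have Sp: "\<And>y. y \<in> S \<Longrightarrow> reach y \<and> dep y \<le> r \<and> (0 < dep y \<longrightarrow> par y \<in> S)"
  proof -
    fix y assume "y \<in> S"
    then obtain x where x: "x \<in> X" "y \<in> pathn (dep x) x" unfolding S_def by blast
    have "reach y \<and> dep y \<le> dep x \<and> (0 < dep y \<longrightarrow> par y \<in> pathn (dep x) x)"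
      using path_props[of x "dep x"] Xr x by blast
    then show "reach y \<and> dep y \<le> r \<and> (0 < dep y \<longrightarrow> par y \<in> S)"
      using Xr x unfolding S_def by force
  qed
  have XS: "X \<subseteq> S" unfolding S_def using path_props Xr by blast
  have vS: "v \<in> S" unfolding S_def X_def using path_props Xr[of "fst (ends f1)"] X_def by blast
  have SB: "S \<subseteq> B r"
  proof
    fix y assume "y \<in> S"
    then have "reach y" "dep y \<le> r" using Sp by auto
    then show "y \<in> B r" using dep_in B_mono by blast
  qed
  have finS: "finite S" using SB B_fin finite_subset by blast
  have SD: "S - {v} \<subseteq> D" using SB D_def by blast
  define F where "F = pe ` (S - {v}) \<union> {f1, f2}"
  have peS: "pe ` (S - {v}) \<subseteq> T" unfolding T_def using SD by blast
  have cpe: "card (pe ` (S - {v})) = card S - 1"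
    using inj_on_subset[OF injD SD] card_image finS vS by (simp add: card_image)
  have fnot: "f1 \<notin> pe ` (S - {v})" "f2 \<notin> pe ` (S - {v})" using f1 f2 peS by auto
  have cF: "card F = card S + 1"
  proof -
    have "card F = card (pe ` (S - {v})) + card {f1, f2}"
      unfolding F_def by (rule card_Un_disjoint) (use finS fnot in auto)
    then show ?thesis using cpe f12 finS vS card_gt_0_iff[of S] by auto
  qed
  have FE: "F \<subseteq> E"
  proof -
    have "pe ` (S - {v}) \<subseteq> E" using peS TB by (auto simp: spanned_edges_def)
    moreover have "f1 \<in> E" "f2 \<in> E" using f1 f2 by (auto simp: spanned_edges_def)
    ultimately show ?thesis unfolding F_def by auto
  qed
  have Fsp: "\<forall>e\<in>F. spans S ends e"
  proof
    fix e assume "e \<in> F"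
    then consider (a) u where "u \<in> S - {v}" "e = pe u" | (b) "e = f1" | (c) "e = f2" unfolding F_def by blast
    then show "spans S ends e"
    proof cases
      case a
      have ru: "reach u" "0 < dep u" using Sp a dep0 by auto
      have "par u \<in> S" using Sp a ru by auto
      then show ?thesis using pe_props[OF ru] a unfolding spans_def by auto
    next
      case b then show ?thesis using XS unfolding spans_def X_def by auto
    next
      case c then show ?thesis using XS unfolding spans_def X_def by auto
    qed
  qed
  have cS: "card S \<le> 4 * r + 1"
  proof -
    have Seq: "S = insert v (\<Union>x\<in>X. pathn (dep x) x - {v})" unfolding S_def using vS S_def by blast
    have fin: "finite (\<Union>x\<in>X. pathn (dep x) x - {v})" by (simp add: X_def path_fin)
    have "card S \<le> Suc (card (\<Union>x\<in>X. pathn (dep x) x - {v}))"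
      unfolding Seq using fin by (simp add: card_insert_if, arith)
    also have "card (\<Union>x\<in>X. pathn (dep x) x - {v}) \<le> (\<Sum>x\<in>X. card (pathn (dep x) x - {v}))"
      by (rule card_UN_le) (simp add: X_def)
    also have "\<dots> \<le> (\<Sum>x\<in>X. r)"
    proof (rule sum_mono)
      fix x assume x: "x \<in> X"
      have "v \<in> pathn (dep x) x" using path_props Xr x by blast
      then have "card (pathn (dep x) x - {v}) = card (pathn (dep x) x) - 1" by (simp add: path_fin)
      then show "card (pathn (dep x) x - {v}) \<le> r" using path_card[of "dep x" x] Xr[OF x] by linarith
    qed
    also have "\<dots> = card X * r" by simp
    also have "\<dots> \<le> 4 * r"
    proof -
      have "card X \<le> length [fst (ends f1), snd (ends f1), fst (ends f2), snd (ends f2)]"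
        unfolding X_def using card_length[of "[fst (ends f1), snd (ends f1), fst (ends f2), snd (ends f2)]"] by (simp only: list.set)
      then have "card X \<le> 4" by simp
      then show ?thesis by simp
    qed
    finally show ?thesis by simp
  qed
  have "S \<subseteq> V" using SB B_sub by blast
  then show ?thesis
    using FE Fsp cF cS r2 by (intro exI[of _ S] exI[of _ F] exI[of _ r]) simp
qed

end




definition wg :: "'v set \<Rightarrow> 'e set \<Rightarrow> ('e \<Rightarrow> 'v \<times> 'v) \<Rightarrow> ('e \<Rightarrow> nat) \<Rightarrow> nat \<Rightarrow> bool" where
  "wg V E ends l k \<longleftrightarrow> finite V \<and> finite E \<and> (\<forall>e\<in>E. fst (ends e) \<in> V \<and> snd (ends e) \<in> V) \<and>
     (\<forall>e\<in>E. 1 \<le> l e) \<and> V \<noteq> {} \<and> (k+1) * card V + sum l E \<le> (k+1) * card E"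

definition goalP :: "'v set \<Rightarrow> 'e set \<Rightarrow> ('e \<Rightarrow> 'v \<times> 'v) \<Rightarrow> ('e \<Rightarrow> nat) \<Rightarrow> nat \<Rightarrow> bool" where
  "goalP V E ends l k \<longleftrightarrow> (\<exists>S F r. S \<subseteq> V \<and> F \<subseteq> E \<and> (\<forall>e\<in>F. spans S ends e) \<and> card S + 1 \<le> card F \<and>
     card S + (\<Sum>e\<in>F. l e - 1) \<le> k * (4 * r + 2) \<and> 2^r \<le> 2 * card V)"

lemma stepA_wg:
  assumes "wg V E ends l k" "e \<in> E" "k < l e"
  shows "wg V (E - {e}) ends l k"
proof -
  have fin: "finite E" using assms(1) unfolding wg_def by auto
  have s: "sum l E = l e + sum l (E - {e})" using sum.remove[OF fin assms(2)] .
  have c: "card E = Suc (card (E - {e}))" using card_Suc_Diff1[OF fin assms(2)] by simp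
  have "(k+1) * card V + sum l E \<le> (k+1) * card E" using assms(1) unfolding wg_def by auto
  moreover have d: "(k+1) * card E = (k+1) * card (E - {e}) + (k+1)" using c by simp
  ultimately have "(k+1) * card V + sum l (E - {e}) \<le> (k+1) * card (E - {e})"
    using s assms(3) by linarith
  note this
  then show ?thesis using assms(1) unfolding wg_def by auto
qed

lemma stepA_goal:
  assumes "goalP V (E - {e}) ends l k"
  shows "goalP V E ends l k"
  using assms unfolding goalP_def by blast

lemma stepB_wg:
  assumes "wg V E ends l k" "v \<in> V" "I = {e\<in>E. fst (ends e) = v \<or> snd (ends e) = v}" "card I \<le> 1"
  shows "wg (V - {v}) (E - I) ends l k"
proof -
  have finE: "finite E" and finV: "finite V" and inv: "(k+1) * card V + sum l E \<le> (k+1) * card E"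
    and l1: "\<forall>e\<in>E. 1 \<le> l e" and eV: "\<forall>e\<in>E. fst (ends e) \<in> V \<and> snd (ends e) \<in> V"
    using assms(1) unfolding wg_def by auto
  have IE: "I \<subseteq> E" using assms(3) by blast
  have sE: "sum l E = sum l I + sum l (E - I)"
    using sum.subset_diff[OF IE finE, of l] by simp
  have cE: "card E = card I + card (E - I)"
    using card_Diff_subset[OF finite_subset[OF IE finE] IE] card_mono[OF finE IE] by simp
  have cV: "card V = Suc (card (V - {v}))" using card_Suc_Diff1[OF finV assms(2)] by simp
  have sI: "card I \<le> sum l I"
  proof -
    have "(\<Sum>e\<in>I. 1) \<le> sum l I" by (rule sum_mono) (use l1 IE in auto)
    then show ?thesis by simp
  qed
  have kI: "(k+1) * card I \<le> k + 1" using mult_le_mono2[OF assms(4), of "k+1"] by simp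
  have d1: "(k+1) * card V = (k+1) * card (V - {v}) + (k+1)" using cV by simp
  have d2: "(k+1) * card E = (k+1) * card I + (k+1) * card (E - I)" using cE by (simp add: add_mult_distrib2)
  have inv2: "(k+1) * card (V - {v}) + sum l (E - I) \<le> (k+1) * card (E - I)"
    using inv sE d1 d2 kI by linarith
  have ne: "V - {v} \<noteq> {}"
  proof
    assume em: "V - {v} = {}"
    then have "E - I = {}" using eV assms(3) by auto
    then have c0: "card (E - I) = 0" by (metis card.empty)
    have c1: "card (V - {v}) = 0" using em by (metis card.empty)
    have "(k+1) + sum l I \<le> (k+1) * card I" using inv sE d1 d2 c0 c1 by simp
    then show False using kI sI by (cases "card I = 0") auto
  qed
  have "\<forall>e\<in>E - I. fst (ends e) \<in> V - {v} \<and> snd (ends e) \<in> V - {v}" using eV assms(3) by auto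
  then show ?thesis using inv2 ne finE finV l1 unfolding wg_def by auto
qed

lemma stepB_goal:
  assumes "goalP (V - {v}) (E - I) ends l k" "finite V"
  shows "goalP V E ends l k"
proof -
  obtain S F r where h: "S \<subseteq> V - {v}" "F \<subseteq> E - I" "\<forall>e\<in>F. spans S ends e" "card S + 1 \<le> card F"
     "card S + (\<Sum>e\<in>F. l e - 1) \<le> k * (4 * r + 2)" "2^r \<le> 2 * card (V - {v})"
    using assms(1) unfolding goalP_def by blast
  have "card (V - {v}) \<le> card V" using assms(2) by (rule card_mono) auto
  then have "2^r \<le> 2 * card V" using h(6) by linarith
  then show ?thesis unfolding goalP_def using h by blast
qed


lemma stepC:
  assumes wg: "wg V E ends l k" and vV: "v \<in> V" and e1: "e1 \<in> E" and e2: "e2 \<in> E" and ne: "e1 \<noteq> e2"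
    and I: "{e\<in>E. fst (ends e) = v \<or> snd (ends e) = v} = {e1, e2}"
    and nl1: "fst (ends e1) \<noteq> snd (ends e1)" and nl2: "fst (ends e2) \<noteq> snd (ends e2)"
    and u: "u = (if fst (ends e1) = v then snd (ends e1) else fst (ends e1))"
    and w: "w = (if fst (ends e2) = v then snd (ends e2) else fst (ends e2))"
  shows "wg (V - {v}) (E - {e2}) (ends(e1 := (u, w))) (l(e1 := l e1 + l e2)) k \<and>
    (goalP (V - {v}) (E - {e2}) (ends(e1 := (u, w))) (l(e1 := l e1 + l e2)) k \<longrightarrow> goalP V E ends l k)"
proof -
  let ?ends = "ends(e1 := (u, w))" and ?l = "l(e1 := l e1 + l e2)"
  have finE: "finite E" and finV: "finite V" and inv: "(k+1) * card V + sum l E \<le> (k+1) * card E"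
    and l1: "\<forall>e\<in>E. 1 \<le> l e" and eV: "\<forall>e\<in>E. fst (ends e) \<in> V \<and> snd (ends e) \<in> V"
    using wg unfolding wg_def by auto
  have inc1: "fst (ends e1) = v \<or> snd (ends e1) = v" using I e1 by blast
  have inc2: "fst (ends e2) = v \<or> snd (ends e2) = v" using I e2 by blast
  have ends1: "(fst (ends e1) = v \<and> snd (ends e1) = u) \<or> (fst (ends e1) = u \<and> snd (ends e1) = v)"
    using u inc1 by auto
  have ends2: "(fst (ends e2) = v \<and> snd (ends e2) = w) \<or> (fst (ends e2) = w \<and> snd (ends e2) = v)"
    using w inc2 by auto
  have uv: "u \<noteq> v" using ends1 nl1 by auto
  have wv: "w \<noteq> v" using ends2 nl2 by auto
  have uV: "u \<in> V" using ends1 eV e1 by auto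
  have wV: "w \<in> V" using ends2 eV e2 by auto
  have other: "\<And>e. e \<in> E \<Longrightarrow> e \<noteq> e1 \<Longrightarrow> e \<noteq> e2 \<Longrightarrow> fst (ends e) \<noteq> v \<and> snd (ends e) \<noteq> v"
    using I by blast
  have e1' : "e1 \<in> E - {e2}" using e1 ne by blast
  have finE2: "finite (E - {e2})" using finE by blast
  have s1: "sum ?l (E - {e2}) = ?l e1 + sum ?l (E - {e2} - {e1})" using sum.remove[OF finE2 e1'] .
  have s2: "sum ?l (E - {e2} - {e1}) = sum l (E - {e2} - {e1})" by (rule sum.cong) auto
  have s3: "sum l (E - {e2}) = l e1 + sum l (E - {e2} - {e1})" using sum.remove[OF finE2 e1'] .
  have s4: "sum l E = l e2 + sum l (E - {e2})" using sum.remove[OF finE e2] .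
  have sumeq: "sum ?l (E - {e2}) = sum l E" using s1 s2 s3 s4 by simp
  have cE: "card E = Suc (card (E - {e2}))" using card_Suc_Diff1[OF finE e2] by simp
  have cV: "card V = Suc (card (V - {v}))" using card_Suc_Diff1[OF finV vV] by simp
  have inv2: "(k+1) * card (V - {v}) + sum ?l (E - {e2}) \<le> (k+1) * card (E - {e2})"
    using inv sumeq cE cV by simp
  have eV2: "\<forall>e\<in>E - {e2}. fst (?ends e) \<in> V - {v} \<and> snd (?ends e) \<in> V - {v}"
  proof
    fix e assume e: "e \<in> E - {e2}"
    show "fst (?ends e) \<in> V - {v} \<and> snd (?ends e) \<in> V - {v}"
    proof (cases "e = e1")
      case True then show ?thesis using uV wV uv wv by simp
    next
      case False then show ?thesis using other[of e] e eV by auto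
    qed
  qed
  have l2: "\<forall>e\<in>E - {e2}. 1 \<le> ?l e" using l1 by auto
  have nV: "V - {v} \<noteq> {}" using uV uv by blast
  have part1: "wg (V - {v}) (E - {e2}) ?ends ?l k"
    unfolding wg_def using finV finE eV2 l2 nV inv2 by auto
  have part2: "goalP V E ends l k" if g: "goalP (V - {v}) (E - {e2}) ?ends ?l k"
  proof -
    obtain S F r where h: "S \<subseteq> V - {v}" "F \<subseteq> E - {e2}" "\<forall>e\<in>F. spans S ?ends e" "card S + 1 \<le> card F"
       "card S + (\<Sum>e\<in>F. ?l e - 1) \<le> k * (4 * r + 2)" "2^r \<le> 2 * card (V - {v})"
      using g unfolding goalP_def by blast
    have r2: "2^r \<le> 2 * card V" using h(6) cV by simp
    have finF: "finite F" using h(2) finE finite_subset by blast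
    show ?thesis
    proof (cases "e1 \<in> F")
      case False
      have sp: "\<forall>e\<in>F. spans S ends e" using h(3) False unfolding spans_def by (metis fun_upd_other)
      have "(\<Sum>e\<in>F. ?l e - 1) = (\<Sum>e\<in>F. l e - 1)" by (rule sum.cong) (use False in auto)
      then show ?thesis unfolding goalP_def using h sp r2 by (intro exI[of _ S] exI[of _ F] exI[of _ r]) auto
    next
      case True
      have uwS: "u \<in> S" "w \<in> S" using h(3) True unfolding spans_def by auto
      have vS: "v \<notin> S" using h(1) by blast
      have e2F: "e2 \<notin> F" using h(2) by blast
      define S0 where "S0 = insert v S"
      define F0 where "F0 = insert e2 F"
      have S0V: "S0 \<subseteq> V" using h(1) vV S0_def by blast
      have F0E: "F0 \<subseteq> E" using h(2) e2 F0_def by blast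
      have sp0: "\<forall>e\<in>F0. spans S0 ends e"
      proof
        fix e assume e: "e \<in> F0"
        show "spans S0 ends e"
        proof (cases "e = e2")
          case True then show ?thesis using ends2 uwS S0_def unfolding spans_def by auto
        next
          case ne2: False
          show ?thesis
          proof (cases "e = e1")
            case True then show ?thesis using ends1 uwS S0_def unfolding spans_def by auto
          next
            case False
            then have "spans S ?ends e" using h(3) e ne2 F0_def by auto
            then show ?thesis using False S0_def unfolding spans_def by auto
          qed
        qed
      qed
      have "finite S" using h(1) finV finite_subset by blast
      then have cS0: "card S0 = card S + 1" using vS S0_def by simp
      have cF0: "card F0 = card F + 1" using e2F finF F0_def by simp
      have t1: "(\<Sum>e\<in>F0. l e - 1) = (l e2 - 1) + (\<Sum>e\<in>F. l e - 1)" using e2F finF F0_def by simp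
      have t2: "(\<Sum>e\<in>F. l e - 1) = (l e1 - 1) + (\<Sum>e\<in>F - {e1}. l e - 1)" using sum.remove[OF finF True] .
      have t3: "(\<Sum>e\<in>F. ?l e - 1) = (?l e1 - 1) + (\<Sum>e\<in>F - {e1}. ?l e - 1)" using sum.remove[OF finF True] .
      have t4: "(\<Sum>e\<in>F - {e1}. ?l e - 1) = (\<Sum>e\<in>F - {e1}. l e - 1)" by (rule sum.cong) auto
      have le1: "1 \<le> l e1" "1 \<le> l e2" using l1 e1 e2 by auto
      have "card S0 + (\<Sum>e\<in>F0. l e - 1) = card S + (\<Sum>e\<in>F. ?l e - 1)"
        using cS0 t1 t2 t3 t4 le1 by simp
      then have "card S0 + (\<Sum>e\<in>F0. l e - 1) \<le> k * (4 * r + 2)" using h(5) by simp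
      moreover have "card S0 + 1 \<le> card F0" using cS0 cF0 h(4) by simp
      ultimately show ?thesis unfolding goalP_def using S0V F0E sp0 r2
        by (intro exI[of _ S0] exI[of _ F0] exI[of _ r]) auto
    qed
  qed
  show ?thesis using part1 part2 by blast
qed


lemma terminal:
  assumes wg: "wg V E ends l k" and k1: "1 \<le> k" and lk: "\<forall>e\<in>E. l e \<le> k"
    and d3: "\<forall>u\<in>V. 3 \<le> deg E ends u"
  shows "goalP V E ends l k"
proof -
  have finE: "finite E" and finV: "finite V" and eV: "\<forall>e\<in>E. fst (ends e) \<in> V \<and> snd (ends e) \<in> V"
    and nV: "V \<noteq> {}"
    using wg unfolding wg_def by auto
  obtain v where vV: "v \<in> V" using nV by blast
  interpret bfs V E ends v using finE finV eV vV d3 by unfold_locales auto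
  obtain S F r where h: "S \<subseteq> V" "F \<subseteq> E" "\<forall>e\<in>F. spans S ends e" "card F = card S + 1"
     "card S \<le> 4 * r + 1" "2^r \<le> 2 * card V"
    using witness by blast
  have "(\<Sum>e\<in>F. l e - 1) \<le> (\<Sum>e\<in>F. k - 1)" by (rule sum_mono) (use lk h(2) in force)
  also have "\<dots> = card F * (k - 1)" by simp
  finally have s: "(\<Sum>e\<in>F. l e - 1) \<le> (card S + 1) * (k - 1)" using h(4) by simp
  obtain k' where k': "k = Suc k'" using k1 by (cases k) auto
  have "(card S + 1) * k' \<le> (4 * r + 2) * k'" using h(5) by (intro mult_le_mono1) simp
  then have "card S + (\<Sum>e\<in>F. l e - 1) \<le> k * (4 * r + 2)" using s h(5) k' by (simp add: algebra_simps)
  then show ?thesis unfolding goalP_def using h by (intro exI[of _ S] exI[of _ F] exI[of _ r]) auto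
qed

lemma deg_ge3:
  assumes finE: "finite E" and I: "I = {e\<in>E. fst (ends e) = v \<or> snd (ends e) = v}"
    and c1: "\<not> card I \<le> 1"
    and nsup: "\<not> (\<exists>e1 e2. e1 \<noteq> e2 \<and> I = {e1, e2} \<and> fst (ends e1) \<noteq> snd (ends e1) \<and> fst (ends e2) \<noteq> snd (ends e2))"
  shows "3 \<le> deg E ends v"
proof -
  let ?X = "{e\<in>E. fst (ends e) = v}" and ?Y = "{e\<in>E. snd (ends e) = v}"
  have "card ?X + card ?Y = card (?X \<union> ?Y) + card (?X \<inter> ?Y)"
    by (rule card_Un_Int) (use finE in auto)
  moreover have "?X \<union> ?Y = I" using I by auto
  ultimately have d: "deg E ends v = card I + card (?X \<inter> ?Y)" unfolding deg_def by simp
  show ?thesis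
  proof (cases "card I = 2")
    case True
    then obtain a b where ab: "I = {a, b}" "a \<noteq> b" by (meson card_2_iff)
    then have "fst (ends a) = snd (ends a) \<or> fst (ends b) = snd (ends b)" using nsup by blast
    moreover have "a \<in> E \<and> (fst (ends a) = v \<or> snd (ends a) = v)" "b \<in> E \<and> (fst (ends b) = v \<or> snd (ends b) = v)"
      using ab I by blast+
    ultimately have "?X \<inter> ?Y \<noteq> {}" by auto
    then have "card (?X \<inter> ?Y) \<noteq> 0" using finE by simp
    then show ?thesis using d True by simp
  next
    case False
    then show ?thesis using d c1 by simp
  qed
qed

lemma main:
  assumes "1 \<le> k" "wg V E ends l k"
  shows "goalP V E ends l k"
  using assms
proof (induction "card V + card E" arbitrary: V E ends l rule: less_induct)
  case less
  have finE: "finite E" and finV: "finite V"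
    using less.prems(2) unfolding wg_def by auto
  show ?case
  proof (cases "\<exists>e\<in>E. k < l e")
    case True
    then obtain e where e: "e \<in> E" "k < l e" by blast
    have w: "wg V (E - {e}) ends l k" using stepA_wg[OF less.prems(2) e] .
    have "card (E - {e}) < card E" using finE e(1) by (meson card_Diff1_less)
    then have "goalP V (E - {e}) ends l k" using less.hyps[OF _ less.prems(1) w] by simp
    then show ?thesis by (rule stepA_goal)
  next
    case noLong: False
    show ?thesis
    proof (cases "\<exists>v\<in>V. card {e\<in>E. fst (ends e) = v \<or> snd (ends e) = v} \<le> 1")
      case True
      then obtain v where v: "v \<in> V" "card {e\<in>E. fst (ends e) = v \<or> snd (ends e) = v} \<le> 1" by blast
      define I where "I = {e\<in>E. fst (ends e) = v \<or> snd (ends e) = v}"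
      have w: "wg (V - {v}) (E - I) ends l k" using stepB_wg[OF less.prems(2) v(1) I_def] v(2) I_def by simp
      have "card (V - {v}) < card V" using finV v(1) by (meson card_Diff1_less)
      moreover have "card (E - I) \<le> card E" using finE by (simp add: card_mono)
      ultimately have "goalP (V - {v}) (E - I) ends l k" using less.hyps[OF _ less.prems(1) w] by simp
      then show ?thesis by (rule stepB_goal[OF _ finV])
    next
      case noSmall: False
      show ?thesis
      proof (cases "\<exists>v\<in>V. \<exists>e1 e2. e1 \<noteq> e2 \<and> {e\<in>E. fst (ends e) = v \<or> snd (ends e) = v} = {e1, e2} \<and> fst (ends e1) \<noteq> snd (ends e1) \<and> fst (ends e2) \<noteq> snd (ends e2)")
        case True
        then obtain v e1 e2 where v: "v \<in> V" "e1 \<noteq> e2" and I: "{e\<in>E. fst (ends e) = v \<or> snd (ends e) = v} = {e1, e2}"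
          and nl: "fst (ends e1) \<noteq> snd (ends e1)" "fst (ends e2) \<noteq> snd (ends e2)" by blast
        have e12: "e1 \<in> E" "e2 \<in> E" using I by blast+
        define u where "u = (if fst (ends e1) = v then snd (ends e1) else fst (ends e1))"
        define w where "w = (if fst (ends e2) = v then snd (ends e2) else fst (ends e2))"
        note C = stepC[OF less.prems(2) v(1) e12 v(2) I nl u_def w_def]
        have "card (V - {v}) < card V" using finV v(1) by (meson card_Diff1_less)
        moreover have "card (E - {e2}) < card E" using finE e12 by (meson card_Diff1_less)
        ultimately have "goalP (V - {v}) (E - {e2}) (ends(e1 := (u, w))) (l(e1 := l e1 + l e2)) k"
          using less.hyps[OF _ less.prems(1) conjunct1[OF C]] by simp
        then show ?thesis using C by blast
      next
        case False
        have "\<forall>u\<in>V. 3 \<le> deg E ends u"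
        proof
          fix u assume u: "u \<in> V"
          show "3 \<le> deg E ends u"
          proof (rule deg_ge3[OF finE refl])
            show "\<not> card {e \<in> E. fst (ends e) = u \<or> snd (ends e) = u} \<le> 1" using noSmall u by blast
            show "\<not> (\<exists>e1 e2. e1 \<noteq> e2 \<and> {e \<in> E. fst (ends e) = u \<or> snd (ends e) = u} = {e1, e2} \<and>
                fst (ends e1) \<noteq> snd (ends e1) \<and> fst (ends e2) \<noteq> snd (ends e2))"
              using False u by blast
          qed
        qed
        moreover have "\<forall>e\<in>E. l e \<le> k" using noLong by auto
        ultimately show ?thesis using terminal[OF less.prems(2) less.prems(1)] by blast
      qed
    qed
  qed
qed


theorem lemma3p1:
  fixes V :: "'v set" and E :: "'e set" and ends :: "'e \<Rightarrow> 'v \<times> 'v"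
    and \<epsilon> :: real
  assumes "\<epsilon> > 0"
    and "multigraph V E ends"
    and "card V \<ge> 2"
    and "real (card E) \<ge> real (card V) * (1 + \<epsilon>)"
  shows "\<exists>S. S \<subseteq> V \<and>
           real (card S) \<le> 8 * log 2 (real (card V)) * real_of_int \<lceil>1 / \<epsilon>\<rceil> \<and>
           card (spanned_edges S E ends) \<ge> card S + 1"
proof -
  have finV: "finite V" and finE: "finite E" and eV: "\<forall>e\<in>E. fst (ends e) \<in> V \<and> snd (ends e) \<in> V"
    using assms(2) unfolding multigraph_def by auto
  define c where "c = \<lceil>1 / \<epsilon>\<rceil>"
  have c1: "c \<ge> 1" unfolding c_def using assms(1) by (simp add: one_le_ceiling)
  define k where "k = nat c"
  have kc: "real k = real_of_int c" unfolding k_def using c1 by simp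
  have k1: "1 \<le> k" unfolding k_def using c1 by simp
  have keps: "real k * \<epsilon> \<ge> 1"
  proof -
    have "1 / \<epsilon> \<le> real k" using kc unfolding c_def by (simp add: le_ceiling_iff)
    then show ?thesis using assms(1) by (simp add: field_simps)
  qed
  have s2: "real (card V) \<ge> 2" using assms(3) by simp
  have mgt: "card E \<ge> card V + 1"
  proof -
    have "real (card V) * (1 + \<epsilon>) > real (card V)" using assms(1) s2 by (simp add: algebra_simps)
    then have "real (card E) > real (card V)" using assms(4) by linarith
    then show ?thesis by simp
  qed
  have lg1: "log 2 (real (card V)) \<ge> 1" using s2 by simp
  show ?thesis
  proof (cases "real (card V) \<le> 8 * log 2 (real (card V)) * real_of_int c")
    case True
    have "spanned_edges V E ends = E" using eV unfolding spanned_edges_def spans_def by auto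
    then show ?thesis using True mgt unfolding c_def by (intro exI[of _ V]) auto
  next
    case False
    have "8 * log 2 (real (card V)) * real_of_int c \<ge> 8 * 1 * 1"
      using lg1 c1 by (intro mult_mono) auto
    then have s8: "real (card V) \<ge> 4" using False by linarith
    have lg2: "log 2 (real (card V)) \<ge> 2"
    proof -
      have "log 2 (real (card V)) \<ge> log 2 4" using s8 by simp
      moreover have "log 2 (4::real) = 2"
      proof -
        show ?thesis using log_nat_power[of "2::real" 2 2] by simp
      qed
      ultimately show ?thesis by simp
    qed
    have w: "wg V E ends (\<lambda>_. 1) k"
    proof -
      have "real k * real (card V) + 1 * real (card V) \<le> real k * real (card V) + (real k * \<epsilon>) * real (card V)"
        using keps by (intro add_left_mono mult_right_mono) auto
      also have "\<dots> = real k * (real (card V) * (1 + \<epsilon>))"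
        by (simp add: algebra_simps)
      also have "\<dots> \<le> real k * real (card E)"
        using assms(4) by (intro mult_left_mono) auto
      also have "\<dots> = real (k * card E)" by simp
      finally have "real ((k+1) * card V) \<le> real (k * card E)" by (simp add: algebra_simps)
      then have "(k+1) * card V \<le> k * card E" by (simp only: of_nat_le_iff)
      then have "(k+1) * card V + card E \<le> (k+1) * card E" by (simp add: algebra_simps)
      moreover have "V \<noteq> {}" using assms(3) by auto
      ultimately show ?thesis unfolding wg_def using finV finE eV by simp
    qed
    obtain S F r where h: "S \<subseteq> V" "F \<subseteq> E" "\<forall>e\<in>F. spans S ends e" "card S + 1 \<le> card F"
       "card S \<le> k * (4 * r + 2)" "2^r \<le> 2 * card V"
      using main[OF k1 w] unfolding goalP_def by auto
    have "F \<subseteq> spanned_edges S E ends" using h(2,3) unfolding spanned_edges_def by auto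
    then have "card F \<le> card (spanned_edges S E ends)"
      by (rule card_mono[rotated]) (simp add: spanned_edges_def finE)
    then have sp: "card (spanned_edges S E ends) \<ge> card S + 1" using h(4) by linarith
    have rb: "real r \<le> 1 + log 2 (real (card V))"
    proof -
      have "(2::real) ^ r \<le> 2 * real (card V)" using h(6)
        by (metis of_nat_le_iff of_nat_mult of_nat_numeral of_nat_power)
      then have "log 2 ((2::real) ^ r) \<le> log 2 (2 * real (card V))"
        using s2 by (subst log_le_cancel_iff) auto
      then show ?thesis using s2 by (simp add: log_mult log_nat_power)
    qed
    have "real (card S) \<le> real (k * (4 * r + 2))" using h(5) by (simp only: of_nat_le_iff)
    also have "\<dots> = real k * (4 * real r + 2)" by (simp add: algebra_simps)
    also have "\<dots> \<le> real k * (4 * (1 + log 2 (real (card V))) + 2)"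
      using rb by (intro mult_left_mono) auto
    also have "\<dots> \<le> real k * (8 * log 2 (real (card V)))"
      using lg2 by (intro mult_left_mono) auto
    finally have "real (card S) \<le> 8 * log 2 (real (card V)) * real_of_int c" using kc by (simp add: algebra_simps)
    then show ?thesis using h(1) sp unfolding c_def by blast
  qed
qed

end
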